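(* Let $A$ and $B$ be finite skew braces with $|A|=|B|$. If $A$ and $B$ are isoclinic, then $\Lambda(A)\cong\Lambda(B)$ and $\Theta(A)\cong\Theta(B)$ as graphs.
   Context: A skew brace is a triple $(A,+,\circ)$ where $(A,+)$ and $(A,\circ)$ are groups with $a\circ(b+c)=a\circ b-a+a\circ c$. $\lambda_a(b)=-a+a\circ b$, $a*b=\lambda_a(b)-b$, $[a,b]_+=a+b-a-b$; $\theta_{(a,b)}(c)=a+\lambda_b(c)-a$ is an action of $(A,+)\rtimes_\lambda(A,\circ)$ on $(A,+)$. $\operatorname{Soc}(A)=\ker\lambda\cap Z(A,+)$ and $\operatorname{Ann}(A)=\operatorname{Soc}(A)\cap Z(A,\circ)$ (an ideal). $A^2$ is the additive subgroup generated by all $a*b$, and $A'$ is the additive subgroup generated by $A^2$ and all $[a,b]_+$. Two skew braces $A,B$ are isoclinic if there exist a skew brace isomorphism $\xi\colon A/\operatorname{Ann}(A)\to B/\operatorname{Ann}(B)$ and a group isomorphism $\delta\colon (A',+)\to(B',+)$ such that for all $a,b\in A$ and all $a_1,b_1\in B$ with $\overline{a_1}=\xi(\overline a)$, $\overline{b_1}=\xi(\overline b)$ one has $\delta([a,b]_+)=[a_1,b_1]_+$ and $\delta(a*b)=a_1*b_1$. For a finite skew brace, $\Lambda(A)$ (resp. $\Theta(A)$) is the graph whose vertices are the $\lambda$-orbits (resp. $\theta$-orbits) of size $>1$, two distinct vertices $L_1,L_2$ adjacent iff $\gcd(|L_1|,|L_2|)\neq1$. *)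

theory Defs
  imports "HOL-Algebra.Algebra"
begin

text \<open>A skew brace on a carrier: P is the additive group (A,+) (written multiplicatively
in HOL-Algebra, possibly non-abelian), C the circle group (A,o), same carrier.\<close>

definition skew_brace :: "'a monoid \<Rightarrow> 'a monoid \<Rightarrow> bool" where
  "skew_brace P C \<longleftrightarrow> group P \<and> group C \<and> carrier P = carrier C \<and>
     (\<forall>a\<in>carrier P. \<forall>b\<in>carrier P. \<forall>c\<in>carrier P.
        a \<otimes>\<^bsub>C\<^esub> (b \<otimes>\<^bsub>P\<^esub> c) =
        (a \<otimes>\<^bsub>C\<^esub> b) \<otimes>\<^bsub>P\<^esub> inv\<^bsub>P\<^esub> a \<otimes>\<^bsub>P\<^esub> (a \<otimes>\<^bsub>C\<^esub> c))"

definition lam :: "'a monoid \<Rightarrow> 'a monoid \<Rightarrow> 'a \<Rightarrow> 'a \<Rightarrow> 'a" where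
  "lam P C a b = inv\<^bsub>P\<^esub> a \<otimes>\<^bsub>P\<^esub> (a \<otimes>\<^bsub>C\<^esub> b)"

definition bstar :: "'a monoid \<Rightarrow> 'a monoid \<Rightarrow> 'a \<Rightarrow> 'a \<Rightarrow> 'a" where
  "bstar P C a b = lam P C a b \<otimes>\<^bsub>P\<^esub> inv\<^bsub>P\<^esub> b"

definition acomm :: "'a monoid \<Rightarrow> 'a \<Rightarrow> 'a \<Rightarrow> 'a" where
  "acomm P a b = a \<otimes>\<^bsub>P\<^esub> b \<otimes>\<^bsub>P\<^esub> inv\<^bsub>P\<^esub> a \<otimes>\<^bsub>P\<^esub> inv\<^bsub>P\<^esub> b"

definition theta :: "'a monoid \<Rightarrow> 'a monoid \<Rightarrow> 'a \<Rightarrow> 'a \<Rightarrow> 'a \<Rightarrow> 'a" where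
  "theta P C a b c = a \<otimes>\<^bsub>P\<^esub> lam P C b c \<otimes>\<^bsub>P\<^esub> inv\<^bsub>P\<^esub> a"

definition Soc :: "'a monoid \<Rightarrow> 'a monoid \<Rightarrow> 'a set" where
  "Soc P C = {a \<in> carrier P. (\<forall>b\<in>carrier P. lam P C a b = b) \<and>
                               (\<forall>b\<in>carrier P. a \<otimes>\<^bsub>P\<^esub> b = b \<otimes>\<^bsub>P\<^esub> a)}"

definition Ann :: "'a monoid \<Rightarrow> 'a monoid \<Rightarrow> 'a set" where
  "Ann P C = {a \<in> Soc P C. \<forall>b\<in>carrier P. a \<otimes>\<^bsub>C\<^esub> b = b \<otimes>\<^bsub>C\<^esub> a}"

definition derived :: "'a monoid \<Rightarrow> 'a monoid \<Rightarrow> 'a set" where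
  "derived P C = generate P ({bstar P C a b | a b. a \<in> carrier P \<and> b \<in> carrier P} \<union>
                             {acomm P a b | a b. a \<in> carrier P \<and> b \<in> carrier P})"

text \<open>Quotient skew brace A/Ann(A): carrier = additive cosets of Ann(A) (which coincide
with circle cosets since Ann(A) is an ideal), operations = induced set products.\<close>
definition quot_iso :: "'a monoid \<Rightarrow> 'a monoid \<Rightarrow> 'b monoid \<Rightarrow> 'b monoid
                        \<Rightarrow> ('a set \<Rightarrow> 'b set) \<Rightarrow> bool" where
  "quot_iso P C Q D xi \<longleftrightarrow>
     bij_betw xi (RCOSETS P (Ann P C)) (RCOSETS Q (Ann Q D)) \<and>
     (\<forall>U\<in>RCOSETS P (Ann P C). \<forall>V\<in>RCOSETS P (Ann P C).
        xi (set_mult P U V) = set_mult Q (xi U) (xi V) \<and>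
        xi (set_mult C U V) = set_mult D (xi U) (xi V))"

definition isoclinic :: "'a monoid \<Rightarrow> 'a monoid \<Rightarrow> 'b monoid \<Rightarrow> 'b monoid \<Rightarrow> bool" where
  "isoclinic P C Q D \<longleftrightarrow>
     (\<exists>xi delta. quot_iso P C Q D xi \<and>
        delta \<in> iso (P\<lparr>carrier := derived P C\<rparr>) (Q\<lparr>carrier := derived Q D\<rparr>) \<and>
        (\<forall>a\<in>carrier P. \<forall>b\<in>carrier P. \<forall>a1\<in>carrier Q. \<forall>b1\<in>carrier Q.
           xi (r_coset P (Ann P C) a) = r_coset Q (Ann Q D) a1 \<longrightarrow>
           xi (r_coset P (Ann P C) b) = r_coset Q (Ann Q D) b1 \<longrightarrow>
           delta (acomm P a b) = acomm Q a1 b1 \<and>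
           delta (bstar P C a b) = bstar Q D a1 b1))"

text \<open>lambda-orbits (action of (A,o) on A by lambda) and theta-orbits
(action of (A,+) \<rtimes> (A,o) on A by theta).\<close>
definition lambda_orbits :: "'a monoid \<Rightarrow> 'a monoid \<Rightarrow> 'a set set" where
  "lambda_orbits P C = {{lam P C a x | a. a \<in> carrier P} | x. x \<in> carrier P}"

definition theta_orbits :: "'a monoid \<Rightarrow> 'a monoid \<Rightarrow> 'a set set" where
  "theta_orbits P C =
     {{theta P C a b x | a b. a \<in> carrier P \<and> b \<in> carrier P} | x. x \<in> carrier P}"

definition big_orbits :: "'a set set \<Rightarrow> 'a set set" where
  "big_orbits Os = {L \<in> Os. card L > 1}"

definition orbit_adj :: "'a set \<Rightarrow> 'a set \<Rightarrow> bool" where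
  "orbit_adj L1 L2 \<longleftrightarrow> L1 \<noteq> L2 \<and> gcd (card L1) (card L2) \<noteq> 1"

definition graph_iso :: "'v set \<Rightarrow> ('v \<Rightarrow> 'v \<Rightarrow> bool) \<Rightarrow> 'w set \<Rightarrow> ('w \<Rightarrow> 'w \<Rightarrow> bool) \<Rightarrow> bool" where
  "graph_iso V E W F \<longleftrightarrow>
     (\<exists>f. bij_betw f V W \<and> (\<forall>u\<in>V. \<forall>v\<in>V. E u v \<longleftrightarrow> F (f u) (f v)))"

definition Lambda_graph_iso :: "'a monoid \<Rightarrow> 'a monoid \<Rightarrow> 'b monoid \<Rightarrow> 'b monoid \<Rightarrow> bool" where
  "Lambda_graph_iso P C Q D \<longleftrightarrow>
     graph_iso (big_orbits (lambda_orbits P C)) orbit_adj (big_orbits (lambda_orbits Q D)) orbit_adj"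

definition Theta_graph_iso :: "'a monoid \<Rightarrow> 'a monoid \<Rightarrow> 'b monoid \<Rightarrow> 'b monoid \<Rightarrow> bool" where
  "Theta_graph_iso P C Q D \<longleftrightarrow>
     graph_iso (big_orbits (theta_orbits P C)) orbit_adj (big_orbits (theta_orbits Q D)) orbit_adj"

end

theory Submission
  imports Defs
begin


locale sb =
  fixes P C :: "'a monoid"
  assumes sb: "skew_brace P C"
begin

lemma gP: "group P" and gC: "group C" and car: "carrier C = carrier P"
  using sb unfolding skew_brace_def by auto

sublocale P: group P by (rule gP)
sublocale C: group C by (rule gC)

lemma ax: "a \<in> carrier P \<Longrightarrow> b \<in> carrier P \<Longrightarrow> c \<in> carrier P \<Longrightarrow>
  a \<otimes>\<^bsub>C\<^esub> (b \<otimes>\<^bsub>P\<^esub> c) =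
        (a \<otimes>\<^bsub>C\<^esub> b) \<otimes>\<^bsub>P\<^esub> inv\<^bsub>P\<^esub> a \<otimes>\<^bsub>P\<^esub> (a \<otimes>\<^bsub>C\<^esub> c)"
  using sb unfolding skew_brace_def by blast

lemma Cm: "a \<in> carrier P \<Longrightarrow> b \<in> carrier P \<Longrightarrow> a \<otimes>\<^bsub>C\<^esub> b \<in> carrier P"
  using C.m_closed car by auto
lemma Ci: "a \<in> carrier P \<Longrightarrow> inv\<^bsub>C\<^esub> a \<in> carrier P"
  using C.inv_closed car by auto

lemma x1: "x \<in> carrier P \<Longrightarrow> x \<otimes>\<^bsub>C\<^esub> \<one>\<^bsub>P\<^esub> = x"
proof -
  assume x: "x \<in> carrier P"
  have "x \<otimes>\<^bsub>C\<^esub> \<one>\<^bsub>P\<^esub> = x \<otimes>\<^bsub>C\<^esub> (\<one>\<^bsub>P\<^esub> \<otimes>\<^bsub>P\<^esub> \<one>\<^bsub>P\<^esub>)" by simp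
  also have "\<dots> = (x \<otimes>\<^bsub>C\<^esub> \<one>\<^bsub>P\<^esub>) \<otimes>\<^bsub>P\<^esub> inv\<^bsub>P\<^esub> x \<otimes>\<^bsub>P\<^esub> (x \<otimes>\<^bsub>C\<^esub> \<one>\<^bsub>P\<^esub>)"
    by (rule ax[OF x P.one_closed P.one_closed])
  finally have "\<one>\<^bsub>P\<^esub> \<otimes>\<^bsub>P\<^esub> (x \<otimes>\<^bsub>C\<^esub> \<one>\<^bsub>P\<^esub>) = (x \<otimes>\<^bsub>C\<^esub> \<one>\<^bsub>P\<^esub>) \<otimes>\<^bsub>P\<^esub> inv\<^bsub>P\<^esub> x \<otimes>\<^bsub>P\<^esub> (x \<otimes>\<^bsub>C\<^esub> \<one>\<^bsub>P\<^esub>)"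
    using x Cm by simp
  hence "\<one>\<^bsub>P\<^esub> = (x \<otimes>\<^bsub>C\<^esub> \<one>\<^bsub>P\<^esub>) \<otimes>\<^bsub>P\<^esub> inv\<^bsub>P\<^esub> x"
    using x Cm P.r_cancel by (metis P.inv_closed P.m_closed P.one_closed)
  thus ?thesis using x Cm
    by (metis P.inv_closed P.inv_inv P.inv_equality P.one_closed)
qed

lemma one_eq: "\<one>\<^bsub>C\<^esub> = \<one>\<^bsub>P\<^esub>"
  using x1[of "\<one>\<^bsub>C\<^esub>"] car by (metis C.l_one C.one_closed P.one_closed)

lemma lam_closed: "a \<in> carrier P \<Longrightarrow> b \<in> carrier P \<Longrightarrow> lam P C a b \<in> carrier P"
  unfolding lam_def using Cm by simp

lemma lam_one: "b \<in> carrier P \<Longrightarrow> lam P C \<one>\<^bsub>P\<^esub> b = b"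
  unfolding lam_def using one_eq car by (metis C.l_one P.inv_one P.l_one)

lemma mult_lam: "a \<in> carrier P \<Longrightarrow> b \<in> carrier P \<Longrightarrow> a \<otimes>\<^bsub>P\<^esub> lam P C a b = a \<otimes>\<^bsub>C\<^esub> b"
  unfolding lam_def using Cm by (simp add: P.m_assoc[symmetric])

lemma lam_mult: "a \<in> carrier P \<Longrightarrow> x \<in> carrier P \<Longrightarrow> y \<in> carrier P \<Longrightarrow>
   lam P C a (x \<otimes>\<^bsub>P\<^esub> y) = lam P C a x \<otimes>\<^bsub>P\<^esub> lam P C a y"
  unfolding lam_def using ax Cm by (simp add: P.m_assoc)

lemma lam_comp: "a \<in> carrier P \<Longrightarrow> b \<in> carrier P \<Longrightarrow> x \<in> carrier P \<Longrightarrow>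
   lam P C a (lam P C b x) = lam P C (a \<otimes>\<^bsub>C\<^esub> b) x"
proof -
  assume a: "a \<in> carrier P" and b: "b \<in> carrier P" and x: "x \<in> carrier P"
  have e: "a = (a \<otimes>\<^bsub>C\<^esub> b) \<otimes>\<^bsub>P\<^esub> inv\<^bsub>P\<^esub> a \<otimes>\<^bsub>P\<^esub> (a \<otimes>\<^bsub>C\<^esub> inv\<^bsub>P\<^esub> b)"
    using ax[of a b "inv\<^bsub>P\<^esub> b"] a b x1 by simp
  have "lam P C a (lam P C b x) = inv\<^bsub>P\<^esub> a \<otimes>\<^bsub>P\<^esub> ((a \<otimes>\<^bsub>C\<^esub> inv\<^bsub>P\<^esub> b) \<otimes>\<^bsub>P\<^esub> inv\<^bsub>P\<^esub> a \<otimes>\<^bsub>P\<^esub> (a \<otimes>\<^bsub>C\<^esub> (b \<otimes>\<^bsub>C\<^esub> x)))"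
    unfolding lam_def using ax a b x Cm by simp
  also have "\<dots> = inv\<^bsub>P\<^esub> a \<otimes>\<^bsub>P\<^esub> (a \<otimes>\<^bsub>C\<^esub> inv\<^bsub>P\<^esub> b) \<otimes>\<^bsub>P\<^esub> inv\<^bsub>P\<^esub> a \<otimes>\<^bsub>P\<^esub> (a \<otimes>\<^bsub>C\<^esub> b \<otimes>\<^bsub>C\<^esub> x)"
    using a b x Cm by (simp add: P.m_assoc C.m_assoc car)
  also have "inv\<^bsub>P\<^esub> a \<otimes>\<^bsub>P\<^esub> (a \<otimes>\<^bsub>C\<^esub> inv\<^bsub>P\<^esub> b) = inv\<^bsub>P\<^esub> (a \<otimes>\<^bsub>C\<^esub> b) \<otimes>\<^bsub>P\<^esub> a"
  proof -
    have "(a \<otimes>\<^bsub>C\<^esub> b) \<otimes>\<^bsub>P\<^esub> (inv\<^bsub>P\<^esub> a \<otimes>\<^bsub>P\<^esub> (a \<otimes>\<^bsub>C\<^esub> inv\<^bsub>P\<^esub> b)) = a"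
      using e a b Cm by (simp add: P.m_assoc)
    thus ?thesis using a b Cm
      by (metis P.inv_closed P.m_closed P.inv_solve_left)
  qed
  finally show ?thesis unfolding lam_def using a b x Cm by (simp add: P.m_assoc)
qed

lemma lam_one2: "a \<in> carrier P \<Longrightarrow> lam P C a \<one>\<^bsub>P\<^esub> = \<one>\<^bsub>P\<^esub>"
  using lam_mult[of a "\<one>\<^bsub>P\<^esub>" "\<one>\<^bsub>P\<^esub>"] lam_closed[of a "\<one>\<^bsub>P\<^esub>"] by simp

lemma lam_inv: "a \<in> carrier P \<Longrightarrow> x \<in> carrier P \<Longrightarrow> lam P C a (inv\<^bsub>P\<^esub> x) = inv\<^bsub>P\<^esub> (lam P C a x)"
proof -
  assume a: "a \<in> carrier P" and x: "x \<in> carrier P"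
  have "lam P C a (inv\<^bsub>P\<^esub> x) \<otimes>\<^bsub>P\<^esub> lam P C a x = \<one>\<^bsub>P\<^esub>"
    using lam_mult[of a "inv\<^bsub>P\<^esub> x" x] lam_one2 a x by simp
  from P.inv_equality[OF this] show ?thesis using lam_closed a x by simp
qed

lemma theta_closed: "a \<in> carrier P \<Longrightarrow> b \<in> carrier P \<Longrightarrow> c \<in> carrier P \<Longrightarrow> theta P C a b c \<in> carrier P"
  unfolding theta_def using lam_closed by simp

lemma theta_comp: "a \<in> carrier P \<Longrightarrow> b \<in> carrier P \<Longrightarrow> a' \<in> carrier P \<Longrightarrow> b' \<in> carrier P \<Longrightarrow> c \<in> carrier P \<Longrightarrow>
  theta P C a b (theta P C a' b' c) = theta P C (a \<otimes>\<^bsub>P\<^esub> lam P C b a') (b \<otimes>\<^bsub>C\<^esub> b') c"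
  unfolding theta_def using lam_closed lam_mult lam_inv lam_comp Cm
  by (simp add: P.m_assoc P.inv_mult_group)

lemma theta_one: "c \<in> carrier P \<Longrightarrow> theta P C \<one>\<^bsub>P\<^esub> \<one>\<^bsub>P\<^esub> c = c"
  unfolding theta_def using lam_one by simp

lemma bstar_closed: "a \<in> carrier P \<Longrightarrow> b \<in> carrier P \<Longrightarrow> bstar P C a b \<in> carrier P"
  unfolding bstar_def using lam_closed by simp

lemma acomm_closed: "a \<in> carrier P \<Longrightarrow> b \<in> carrier P \<Longrightarrow> acomm P a b \<in> carrier P"
  unfolding acomm_def by simp

lemma lam_bstar: "a \<in> carrier P \<Longrightarrow> b \<in> carrier P \<Longrightarrow> lam P C a b = bstar P C a b \<otimes>\<^bsub>P\<^esub> b"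
  unfolding bstar_def using lam_closed by (simp add: P.m_assoc)

lemma theta_decomp: "a \<in> carrier P \<Longrightarrow> b \<in> carrier P \<Longrightarrow> x \<in> carrier P \<Longrightarrow>
  theta P C a b x \<otimes>\<^bsub>P\<^esub> inv\<^bsub>P\<^esub> x = acomm P a (lam P C b x) \<otimes>\<^bsub>P\<^esub> bstar P C b x"
  unfolding theta_def acomm_def bstar_def using lam_closed[of b x] by (simp add: P.m_assoc, simp add: P.m_assoc[symmetric])

lemma Ann_sub: "Ann P C \<subseteq> carrier P"
  unfolding Ann_def Soc_def by auto

lemma Ann_D: "z \<in> Ann P C \<Longrightarrow> z \<in> carrier P \<and> (\<forall>b\<in>carrier P. lam P C z b = b) \<and>
   (\<forall>b\<in>carrier P. z \<otimes>\<^bsub>P\<^esub> b = b \<otimes>\<^bsub>P\<^esub> z) \<and> (\<forall>b\<in>carrier P. z \<otimes>\<^bsub>C\<^esub> b = b \<otimes>\<^bsub>C\<^esub> z)"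
  unfolding Ann_def Soc_def by auto

lemma Ann_I: "z \<in> carrier P \<Longrightarrow> (\<forall>b\<in>carrier P. lam P C z b = b) \<Longrightarrow>
   (\<forall>b\<in>carrier P. z \<otimes>\<^bsub>P\<^esub> b = b \<otimes>\<^bsub>P\<^esub> z) \<Longrightarrow> (\<forall>b\<in>carrier P. z \<otimes>\<^bsub>C\<^esub> b = b \<otimes>\<^bsub>C\<^esub> z) \<Longrightarrow> z \<in> Ann P C"
  unfolding Ann_def Soc_def by auto

lemma Ann_mult: "z \<in> Ann P C \<Longrightarrow> x \<in> carrier P \<Longrightarrow> z \<otimes>\<^bsub>C\<^esub> x = z \<otimes>\<^bsub>P\<^esub> x"
proof -
  assume z: "z \<in> Ann P C" and x: "x \<in> carrier P"
  have "lam P C z x = x" "z \<in> carrier P" using Ann_D[OF z] x by blast+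
  thus ?thesis using mult_lam[of z x] x by simp
qed

lemma Ann_inv: "z \<in> Ann P C \<Longrightarrow> inv\<^bsub>C\<^esub> z = inv\<^bsub>P\<^esub> z"
proof -
  assume z: "z \<in> Ann P C"
  hence zc: "z \<in> carrier P" using Ann_D by blast
  have "z \<otimes>\<^bsub>C\<^esub> inv\<^bsub>P\<^esub> z = \<one>\<^bsub>C\<^esub>" using Ann_mult[OF z] zc one_eq by simp
  moreover have "z \<otimes>\<^bsub>C\<^esub> inv\<^bsub>P\<^esub> z = inv\<^bsub>P\<^esub> z \<otimes>\<^bsub>C\<^esub> z" using Ann_D[OF z] zc P.inv_closed by blast
  ultimately have "inv\<^bsub>P\<^esub> z \<otimes>\<^bsub>C\<^esub> z = \<one>\<^bsub>C\<^esub>" by simp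
  from C.inv_equality[OF this] show ?thesis using zc car by simp
qed

lemma one_Ann: "\<one>\<^bsub>P\<^esub> \<in> Ann P C"
proof (rule Ann_I)
  show "\<one>\<^bsub>P\<^esub> \<in> carrier P" by simp
  show "\<forall>b\<in>carrier P. lam P C \<one>\<^bsub>P\<^esub> b = b" using lam_one by blast
  show "\<forall>b\<in>carrier P. \<one>\<^bsub>P\<^esub> \<otimes>\<^bsub>P\<^esub> b = b \<otimes>\<^bsub>P\<^esub> \<one>\<^bsub>P\<^esub>" by simp
  show "\<forall>b\<in>carrier P. \<one>\<^bsub>P\<^esub> \<otimes>\<^bsub>C\<^esub> b = b \<otimes>\<^bsub>C\<^esub> \<one>\<^bsub>P\<^esub>"
    using car C.l_one C.r_one unfolding one_eq[symmetric] by simp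
qed

lemma Ann_subP: "subgroup (Ann P C) P"
proof (rule P.subgroupI)
  show "Ann P C \<subseteq> carrier P" by (rule Ann_sub)
  show "Ann P C \<noteq> {}"
    using one_Ann by blast
next
  fix z assume z: "z \<in> Ann P C"
  note D = Ann_D[OF z]
  have zc: "z \<in> carrier P" using D by blast
  show "inv\<^bsub>P\<^esub> z \<in> Ann P C"
  proof (rule Ann_I)
    show "inv\<^bsub>P\<^esub> z \<in> carrier P" using zc by simp
    show "\<forall>b\<in>carrier P. lam P C (inv\<^bsub>P\<^esub> z) b = b"
    proof
      fix b assume b: "b \<in> carrier P"
      have "lam P C z b = b" using D b by blast
      hence "lam P C (inv\<^bsub>C\<^esub> z) b = lam P C (inv\<^bsub>C\<^esub> z) (lam P C z b)" by simp
      also have "\<dots> = b" using lam_comp[OF Ci[OF zc] zc b] C.l_inv[of z] car zc one_eq lam_one b by simp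
      finally show "lam P C (inv\<^bsub>P\<^esub> z) b = b" using Ann_inv[OF z] by simp
    qed
    show "\<forall>b\<in>carrier P. inv\<^bsub>P\<^esub> z \<otimes>\<^bsub>P\<^esub> b = b \<otimes>\<^bsub>P\<^esub> inv\<^bsub>P\<^esub> z"
    proof
      fix b assume b: "b \<in> carrier P"
      have "z \<otimes>\<^bsub>P\<^esub> inv\<^bsub>P\<^esub> b = inv\<^bsub>P\<^esub> b \<otimes>\<^bsub>P\<^esub> z" using D b P.inv_closed by blast
      hence "inv\<^bsub>P\<^esub> (z \<otimes>\<^bsub>P\<^esub> inv\<^bsub>P\<^esub> b) = inv\<^bsub>P\<^esub> (inv\<^bsub>P\<^esub> b \<otimes>\<^bsub>P\<^esub> z)" by simp
      thus "inv\<^bsub>P\<^esub> z \<otimes>\<^bsub>P\<^esub> b = b \<otimes>\<^bsub>P\<^esub> inv\<^bsub>P\<^esub> z" using zc b by (simp add: P.inv_mult_group)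
    qed
    show "\<forall>b\<in>carrier P. inv\<^bsub>P\<^esub> z \<otimes>\<^bsub>C\<^esub> b = b \<otimes>\<^bsub>C\<^esub> inv\<^bsub>P\<^esub> z"
    proof
      fix b assume b: "b \<in> carrier P"
      have "z \<otimes>\<^bsub>C\<^esub> inv\<^bsub>C\<^esub> b = inv\<^bsub>C\<^esub> b \<otimes>\<^bsub>C\<^esub> z" using D b Ci by blast
      hence "inv\<^bsub>C\<^esub> (z \<otimes>\<^bsub>C\<^esub> inv\<^bsub>C\<^esub> b) = inv\<^bsub>C\<^esub> (inv\<^bsub>C\<^esub> b \<otimes>\<^bsub>C\<^esub> z)" by simp
      hence "inv\<^bsub>C\<^esub> z \<otimes>\<^bsub>C\<^esub> b = b \<otimes>\<^bsub>C\<^esub> inv\<^bsub>C\<^esub> z" proof -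
        have "z \<in> carrier C" "b \<in> carrier C" using zc b car by auto
        thus ?thesis using \<open>inv\<^bsub>C\<^esub> (z \<otimes>\<^bsub>C\<^esub> inv\<^bsub>C\<^esub> b) = inv\<^bsub>C\<^esub> (inv\<^bsub>C\<^esub> b \<otimes>\<^bsub>C\<^esub> z)\<close> by (simp add: C.inv_mult_group)
      qed
      thus "inv\<^bsub>P\<^esub> z \<otimes>\<^bsub>C\<^esub> b = b \<otimes>\<^bsub>C\<^esub> inv\<^bsub>P\<^esub> z" using Ann_inv[OF z] by simp
    qed
  qed
next
  fix z w assume z: "z \<in> Ann P C" and w: "w \<in> Ann P C"
  note Dz = Ann_D[OF z] and Dw = Ann_D[OF w]
  have zc: "z \<in> carrier P" and wc: "w \<in> carrier P" using Dz Dw by auto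
  have e: "z \<otimes>\<^bsub>P\<^esub> w = z \<otimes>\<^bsub>C\<^esub> w" using Ann_mult[OF z wc] by simp
  show "z \<otimes>\<^bsub>P\<^esub> w \<in> Ann P C"
  proof (rule Ann_I)
    show "z \<otimes>\<^bsub>P\<^esub> w \<in> carrier P" using zc wc by simp
    show "\<forall>b\<in>carrier P. lam P C (z \<otimes>\<^bsub>P\<^esub> w) b = b"
    proof
      fix b assume b: "b \<in> carrier P"
      have "lam P C w b = b" "lam P C z b = b" using Dz Dw b by blast+
      thus "lam P C (z \<otimes>\<^bsub>P\<^esub> w) b = b" using e lam_comp[OF zc wc b] by simp
    qed
    show "\<forall>b\<in>carrier P. z \<otimes>\<^bsub>P\<^esub> w \<otimes>\<^bsub>P\<^esub> b = b \<otimes>\<^bsub>P\<^esub> (z \<otimes>\<^bsub>P\<^esub> w)"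
    proof
      fix b assume b: "b \<in> carrier P"
      have "z \<otimes>\<^bsub>P\<^esub> w \<otimes>\<^bsub>P\<^esub> b = z \<otimes>\<^bsub>P\<^esub> (b \<otimes>\<^bsub>P\<^esub> w)" using Dw b zc wc P.m_assoc by (metis (no_types))
      also have "\<dots> = (z \<otimes>\<^bsub>P\<^esub> b) \<otimes>\<^bsub>P\<^esub> w" using b zc wc by (simp add: P.m_assoc)
      also have "\<dots> = b \<otimes>\<^bsub>P\<^esub> (z \<otimes>\<^bsub>P\<^esub> w)" using Dz b zc wc P.m_assoc by (metis (no_types))
      finally show "z \<otimes>\<^bsub>P\<^esub> w \<otimes>\<^bsub>P\<^esub> b = b \<otimes>\<^bsub>P\<^esub> (z \<otimes>\<^bsub>P\<^esub> w)" .
    qed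
    show "\<forall>b\<in>carrier P. z \<otimes>\<^bsub>P\<^esub> w \<otimes>\<^bsub>C\<^esub> b = b \<otimes>\<^bsub>C\<^esub> (z \<otimes>\<^bsub>P\<^esub> w)"
    proof
      fix b assume b: "b \<in> carrier P"
      have "z \<otimes>\<^bsub>C\<^esub> w \<otimes>\<^bsub>C\<^esub> b = z \<otimes>\<^bsub>C\<^esub> (b \<otimes>\<^bsub>C\<^esub> w)" using Dw b zc wc car C.m_assoc by (metis (no_types))
      also have "\<dots> = (z \<otimes>\<^bsub>C\<^esub> b) \<otimes>\<^bsub>C\<^esub> w" using b zc wc car by (simp add: C.m_assoc)
      also have "\<dots> = b \<otimes>\<^bsub>C\<^esub> (z \<otimes>\<^bsub>C\<^esub> w)" using Dz b zc wc car C.m_assoc by (metis (no_types))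
      finally show "z \<otimes>\<^bsub>P\<^esub> w \<otimes>\<^bsub>C\<^esub> b = b \<otimes>\<^bsub>C\<^esub> (z \<otimes>\<^bsub>P\<^esub> w)" using e by simp
    qed
  qed
qed

lemma Ann_subC: "subgroup (Ann P C) C"
proof (rule C.subgroupI)
  show "Ann P C \<subseteq> carrier C" using Ann_sub car by simp
  show "Ann P C \<noteq> {}" using Ann_subP subgroup.one_closed by blast
  fix z assume z: "z \<in> Ann P C"
  show "inv\<^bsub>C\<^esub> z \<in> Ann P C" unfolding Ann_inv[OF z] by (rule subgroup.m_inv_closed[OF Ann_subP z])
next
  fix z w assume z: "z \<in> Ann P C" and w: "w \<in> Ann P C"
  have "w \<in> carrier P" using w Ann_sub by blast
  thus "z \<otimes>\<^bsub>C\<^esub> w \<in> Ann P C" using Ann_mult[OF z] subgroup.m_closed[OF Ann_subP z w] by simp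
qed

lemma Ann_normP: "Ann P C \<lhd> P"
proof (rule P.normalI[OF Ann_subP], intro ballI)
  fix x assume x: "x \<in> carrier P"
  show "Ann P C #>\<^bsub>P\<^esub> x = x <#\<^bsub>P\<^esub> Ann P C"
    unfolding r_coset_def l_coset_def
  proof (intro SUP_cong refl)
    fix h assume "h \<in> Ann P C"
    hence "h \<otimes>\<^bsub>P\<^esub> x = x \<otimes>\<^bsub>P\<^esub> h" using Ann_D x by blast
    thus "{h \<otimes>\<^bsub>P\<^esub> x} = {x \<otimes>\<^bsub>P\<^esub> h}" by simp
  qed
qed

lemma Ann_normC: "Ann P C \<lhd> C"
proof (rule C.normalI[OF Ann_subC], intro ballI)
  fix x assume x: "x \<in> carrier C"
  show "Ann P C #>\<^bsub>C\<^esub> x = x <#\<^bsub>C\<^esub> Ann P C"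
    unfolding r_coset_def l_coset_def
  proof (intro SUP_cong refl)
    fix h assume "h \<in> Ann P C"
    hence "h \<otimes>\<^bsub>C\<^esub> x = x \<otimes>\<^bsub>C\<^esub> h" using Ann_D x car by blast
    thus "{h \<otimes>\<^bsub>C\<^esub> x} = {x \<otimes>\<^bsub>C\<^esub> h}" by simp
  qed
qed

lemma coset_eq: "x \<in> carrier P \<Longrightarrow> r_coset C (Ann P C) x = r_coset P (Ann P C) x"
  unfolding r_coset_def using Ann_mult by (intro SUP_cong refl) auto

lemma RC_eq: "RCOSETS C (Ann P C) = RCOSETS P (Ann P C)"
  unfolding RCOSETS_def using coset_eq car by auto

definition "lamO x = {lam P C a x | a. a \<in> carrier P}"
definition "thO x = {theta P C a b x | a b. a \<in> carrier P \<and> b \<in> carrier P}"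

lemma lamO_I: "a \<in> carrier P \<Longrightarrow> lam P C a x \<in> lamO x"
  unfolding lamO_def by blast
lemma thO_I: "a \<in> carrier P \<Longrightarrow> b \<in> carrier P \<Longrightarrow> theta P C a b x \<in> thO x"
  unfolding thO_def by blast

lemma lamO_refl: "x \<in> carrier P \<Longrightarrow> x \<in> lamO x \<and> lamO x \<subseteq> carrier P"
proof -
  assume x: "x \<in> carrier P"
  have "lam P C \<one>\<^bsub>P\<^esub> x = x" using lam_one[OF x] .
  hence "x \<in> lamO x" unfolding lamO_def using P.one_closed by (auto intro!: exI[of _ "\<one>\<^bsub>P\<^esub>"])
  moreover have "lamO x \<subseteq> carrier P" unfolding lamO_def using lam_closed x by blast
  ultimately show ?thesis by blast
qed

lemma lamO_trans: "x \<in> carrier P \<Longrightarrow> y \<in> lamO x \<Longrightarrow> lamO y = lamO x"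
proof -
  assume x: "x \<in> carrier P" and "y \<in> lamO x"
  then obtain a where a: "a \<in> carrier P" and y: "y = lam P C a x" unfolding lamO_def by blast
  show ?thesis
  proof
    show "lamO y \<subseteq> lamO x"
    proof
      fix u assume "u \<in> lamO y"
      then obtain b where b: "b \<in> carrier P" and u: "u = lam P C b y" unfolding lamO_def by blast
      have "u = lam P C (b \<otimes>\<^bsub>C\<^esub> a) x" using u y lam_comp a b x by simp
      thus "u \<in> lamO x" using lamO_I[OF Cm[OF b a]] by simp
    qed
    show "lamO x \<subseteq> lamO y"
    proof
      fix u assume "u \<in> lamO x"
      then obtain c where c: "c \<in> carrier P" and u: "u = lam P C c x" unfolding lamO_def by blast
      have aC: "a \<in> carrier C" and cC: "c \<in> carrier C" using a c car by auto
      have e: "c \<otimes>\<^bsub>C\<^esub> inv\<^bsub>C\<^esub> a \<otimes>\<^bsub>C\<^esub> a = c" using aC cC by (simp add: C.m_assoc)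
      have "lam P C (c \<otimes>\<^bsub>C\<^esub> inv\<^bsub>C\<^esub> a) y = u" using y u lam_comp[OF Cm[OF c Ci[OF a]] a x] e by simp
      thus "u \<in> lamO y" using lamO_I[OF Cm[OF c Ci[OF a]], of y] by simp
    qed
  qed
qed

lemma thO_refl: "x \<in> carrier P \<Longrightarrow> x \<in> thO x \<and> thO x \<subseteq> carrier P"
proof -
  assume x: "x \<in> carrier P"
  have "theta P C \<one>\<^bsub>P\<^esub> \<one>\<^bsub>P\<^esub> x = x" using theta_one[OF x] .
  hence "x \<in> thO x" unfolding thO_def using P.one_closed by (auto intro!: exI[of _ "\<one>\<^bsub>P\<^esub>"])
  moreover have "thO x \<subseteq> carrier P" unfolding thO_def using theta_closed x by blast
  ultimately show ?thesis by blast
qed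

lemma thO_trans: "x \<in> carrier P \<Longrightarrow> y \<in> thO x \<Longrightarrow> thO y = thO x"
proof -
  assume x: "x \<in> carrier P" and "y \<in> thO x"
  then obtain a' b' where a': "a' \<in> carrier P" and b': "b' \<in> carrier P" and y: "y = theta P C a' b' x"
    unfolding thO_def by blast
  show ?thesis
  proof
    show "thO y \<subseteq> thO x"
    proof
      fix u assume "u \<in> thO y"
      then obtain a b where a: "a \<in> carrier P" and b: "b \<in> carrier P" and u: "u = theta P C a b y"
        unfolding thO_def by blast
      have "u = theta P C (a \<otimes>\<^bsub>P\<^esub> lam P C b a') (b \<otimes>\<^bsub>C\<^esub> b') x" using u y theta_comp a b a' b' x by simp
      thus "u \<in> thO x" using thO_I[OF P.m_closed[OF a lam_closed[OF b a']] Cm[OF b b']] by simp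
    qed
    show "thO x \<subseteq> thO y"
    proof
      fix u assume "u \<in> thO x"
      then obtain a b where a: "a \<in> carrier P" and b: "b \<in> carrier P" and u: "u = theta P C a b x"
        unfolding thO_def by blast
      define b'' where "b'' = b \<otimes>\<^bsub>C\<^esub> inv\<^bsub>C\<^esub> b'"
      have b'': "b'' \<in> carrier P" unfolding b''_def using Cm Ci b b' by blast
      define a'' where "a'' = a \<otimes>\<^bsub>P\<^esub> inv\<^bsub>P\<^esub> (lam P C b'' a')"
      have l: "lam P C b'' a' \<in> carrier P" using lam_closed b'' a' by blast
      have a'': "a'' \<in> carrier P" unfolding a''_def using l a by simp
      have e1: "a'' \<otimes>\<^bsub>P\<^esub> lam P C b'' a' = a" unfolding a''_def using l a by (simp add: P.m_assoc)
      have bC: "b \<in> carrier C" and bC': "b' \<in> carrier C" using b b' car by auto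
      have e2: "b'' \<otimes>\<^bsub>C\<^esub> b' = b" unfolding b''_def using bC bC' by (simp add: C.m_assoc)
      have "theta P C a'' b'' y = u" using theta_comp[OF a'' b'' a' b' x] e1 e2 y u by simp
      thus "u \<in> thO y" using thO_I[OF a'' b'', of y] by simp
    qed
  qed
qed

lemma lambda_orbits_eq: "lambda_orbits P C = {lamO x | x. x \<in> carrier P}"
  unfolding lambda_orbits_def lamO_def by simp
lemma theta_orbits_eq: "theta_orbits P C = {thO x | x. x \<in> carrier P}"
  unfolding theta_orbits_def thO_def by simp

end


lemma orbit_count:
  fixes XX :: "'a set" and Orb :: "'a \<Rightarrow> 'a set"
  assumes fin: "finite XX" and rf: "\<forall>x\<in>XX. x \<in> Orb x \<and> Orb x \<subseteq> XX"
    and tr: "\<forall>x\<in>XX. \<forall>y\<in>Orb x. Orb y = Orb x"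
  shows "n * card {L \<in> {Orb x | x. x \<in> XX}. card L = n} = card {x\<in>XX. card (Orb x) = n}"
proof -
  let ?F = "{L \<in> {Orb x | x. x \<in> XX}. card L = n}"
  have U: "{x\<in>XX. card (Orb x) = n} = \<Union>?F"
  proof
    show "{x\<in>XX. card (Orb x) = n} \<subseteq> \<Union>?F" using rf by blast
    show "\<Union>?F \<subseteq> {x\<in>XX. card (Orb x) = n}"
    proof
      fix y assume "y \<in> \<Union>?F"
      then obtain x where x: "x \<in> XX" and y: "y \<in> Orb x" and c: "card (Orb x) = n" by blast
      have "y \<in> XX" using rf x y by blast
      moreover have "Orb y = Orb x" using tr x y by blast
      ultimately show "y \<in> {x\<in>XX. card (Orb x) = n}" using c by simp
    qed
  qed
  have pd: "pairwise disjnt ?F"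
  proof (rule pairwiseI)
    fix L1 L2 assume "L1 \<in> ?F" "L2 \<in> ?F" "L1 \<noteq> L2"
    then obtain x1 x2 where x1: "x1 \<in> XX" "L1 = Orb x1" and x2: "x2 \<in> XX" "L2 = Orb x2" by blast
    show "disjnt L1 L2"
    proof (rule ccontr)
      assume "\<not> disjnt L1 L2"
      then obtain z where "z \<in> Orb x1" "z \<in> Orb x2" unfolding disjnt_def using x1 x2 by blast
      hence "Orb x1 = Orb x2" using tr x1 x2 by metis
      thus False using \<open>L1 \<noteq> L2\<close> x1 x2 by simp
    qed
  qed
  have fF: "\<And>A. A \<in> ?F \<Longrightarrow> finite A" using rf fin finite_subset by blast
  have finF: "finite ?F"
  proof -
    have "?F \<subseteq> Pow XX" using rf by blast
    thus ?thesis using fin finite_subset by blast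
  qed
  have "card (\<Union>?F) = sum card ?F" by (rule card_Union_disjoint[OF pd fF])
  also have "\<dots> = sum (\<lambda>_. n) ?F" by (rule sum.cong) auto
  also have "\<dots> = n * card ?F" by simp
  finally show ?thesis using U by simp
qed

lemma equal_counts_bij:
  fixes Vs :: "'a set set" and Ws :: "'b set set"
  assumes fV: "finite Vs" and fW: "finite Ws"
    and eq: "\<forall>n. card {L\<in>Vs. card L = n} = card {L\<in>Ws. card L = n}"
  shows "\<exists>f. bij_betw f Vs Ws \<and> (\<forall>L\<in>Vs. card (f L) = card L)"
proof -
  have "\<forall>n. \<exists>g. bij_betw g {L\<in>Vs. card L = n} {L\<in>Ws. card L = n}"
  proof
    fix n
    show "\<exists>g. bij_betw g {L\<in>Vs. card L = n} {L\<in>Ws. card L = n}"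
      by (rule finite_same_card_bij) (use fV fW eq in auto)
  qed
  hence "\<exists>G. \<forall>n. bij_betw (G n) {L\<in>Vs. card L = n} {L\<in>Ws. card L = n}" by (rule choice)
  then obtain G where G: "\<And>n. bij_betw (G n) {L\<in>Vs. card L = n} {L\<in>Ws. card L = n}" by blast
  define f where "f L = G (card L) L" for L
  have m: "\<And>L. L \<in> Vs \<Longrightarrow> f L \<in> Ws \<and> card (f L) = card L"
  proof -
    fix L assume "L \<in> Vs"
    hence "L \<in> {L'\<in>Vs. card L' = card L}" by simp
    from bij_betw_apply[OF G this] show "f L \<in> Ws \<and> card (f L) = card L" unfolding f_def by simp
  qed
  have "inj_on f Vs"
  proof (rule inj_onI)
    fix L L' assume L: "L \<in> Vs" and L': "L' \<in> Vs" and e: "f L = f L'"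
    have c: "card L = card L'" using m[OF L] m[OF L'] e by simp
    have "G (card L) L = G (card L) L'" using e c unfolding f_def by simp
    moreover have "inj_on (G (card L)) {L''\<in>Vs. card L'' = card L}" using G bij_betw_def by blast
    ultimately show "L = L'" using L L' c by (auto dest: inj_onD)
  qed
  moreover have "f ` Vs = Ws"
  proof
    show "f ` Vs \<subseteq> Ws" using m by blast
    show "Ws \<subseteq> f ` Vs"
    proof
      fix W assume W: "W \<in> Ws"
      have "W \<in> G (card W) ` {L\<in>Vs. card L = card W}" using G[of "card W"] W unfolding bij_betw_def by blast
      then obtain L where L: "L \<in> Vs" "card L = card W" "W = G (card W) L" by blast
      hence "f L = W" unfolding f_def by simp
      thus "W \<in> f ` Vs" using L by blast
    qed
  qed
  ultimately show ?thesis using m unfolding bij_betw_def by blast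
qed

lemma graph_from_bij:
  assumes "bij_betw f Vs Ws" "\<forall>L\<in>Vs. card (f L) = card L"
  shows "graph_iso Vs orbit_adj Ws orbit_adj"
  unfolding graph_iso_def orbit_adj_def
proof (intro exI conjI ballI)
  show "bij_betw f Vs Ws" by fact
  fix u v assume u: "u \<in> Vs" and v: "v \<in> Vs"
  have "f u = f v \<longleftrightarrow> u = v" using assms(1) u v unfolding bij_betw_def inj_on_def by blast
  thus "(u \<noteq> v \<and> gcd (card u) (card v) \<noteq> 1) = (f u \<noteq> f v \<and> gcd (card (f u)) (card (f v)) \<noteq> 1)"
    using assms(2) u v by simp
qed

lemma big_count: "card {L \<in> big_orbits Os. card L = n} = (if 1 < n then card {L\<in>Os. card L = n} else 0)"
proof -
  have "{L \<in> big_orbits Os. card L = n} = (if 1 < n then {L\<in>Os. card L = n} else {})"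
    unfolding big_orbits_def by auto
  thus ?thesis by simp
qed

lemma block_count:
  fixes XX :: "'a set" and YY :: "'b set" and R :: "'a set set" and R' :: "'b set set"
    and f :: "'a \<Rightarrow> nat" and g :: "'b \<Rightarrow> nat"
  assumes fX: "finite XX" and UR: "\<Union>R = XX" and dR: "pairwise disjnt R" and cR: "\<forall>U\<in>R. card U = k"
    and fY: "finite YY" and UR': "\<Union>R' = YY" and dR': "pairwise disjnt R'" and cR': "\<forall>V\<in>R'. card V = k"
    and bij: "bij_betw xi R R'" and ne: "\<forall>U\<in>R. U \<noteq> {}" and ne': "\<forall>V\<in>R'. V \<noteq> {}"
    and compat: "\<forall>U\<in>R. \<forall>x\<in>U. \<forall>y\<in>xi U. f x = g y"
  shows "card {x\<in>XX. f x = n} = card {y\<in>YY. g y = n}"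
proof -
  have finR: "finite R" using fX unfolding UR[symmetric] by (rule finite_UnionD)
  have finR': "finite R'" using fY unfolding UR'[symmetric] by (rule finite_UnionD)
  have e1: "{x\<in>XX. f x = n} = (\<Union>U\<in>R. {x\<in>U. f x = n})" unfolding UR[symmetric] by blast
  have e2: "{y\<in>YY. g y = n} = (\<Union>V\<in>R'. {y\<in>V. g y = n})" unfolding UR'[symmetric] by blast
  have c1: "card {x\<in>XX. f x = n} = (\<Sum>U\<in>R. card {x\<in>U. f x = n})"
    unfolding e1
  proof (rule card_UN_disjoint[OF finR])
    show "\<forall>i\<in>R. finite {x \<in> i. f x = n}" proof
      fix i assume "i \<in> R"
      hence "i \<subseteq> XX" using UR by blast
      hence "finite i" using fX finite_subset by blast
      thus "finite {x \<in> i. f x = n}" by simp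
    qed
    show "\<forall>i\<in>R. \<forall>j\<in>R. i \<noteq> j \<longrightarrow> {x \<in> i. f x = n} \<inter> {x \<in> j. f x = n} = {}"
    proof (intro ballI impI)
      fix i j assume "i \<in> R" "j \<in> R" "i \<noteq> j"
      hence "i \<inter> j = {}" using dR unfolding pairwise_def disjnt_def by blast
      thus "{x \<in> i. f x = n} \<inter> {x \<in> j. f x = n} = {}" by blast
    qed
  qed
  have c2: "card {y\<in>YY. g y = n} = (\<Sum>V\<in>R'. card {y\<in>V. g y = n})"
    unfolding e2
  proof (rule card_UN_disjoint[OF finR'])
    show "\<forall>i\<in>R'. finite {x \<in> i. g x = n}" proof
      fix i assume "i \<in> R'"
      hence "i \<subseteq> YY" using UR' by blast
      hence "finite i" using fY finite_subset by blast
      thus "finite {x \<in> i. g x = n}" by simp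
    qed
    show "\<forall>i\<in>R'. \<forall>j\<in>R'. i \<noteq> j \<longrightarrow> {x \<in> i. g x = n} \<inter> {x \<in> j. g x = n} = {}"
    proof (intro ballI impI)
      fix i j assume "i \<in> R'" "j \<in> R'" "i \<noteq> j"
      hence "i \<inter> j = {}" using dR' unfolding pairwise_def disjnt_def by blast
      thus "{x \<in> i. g x = n} \<inter> {x \<in> j. g x = n} = {}" by blast
    qed
  qed
  have "(\<Sum>V\<in>R'. card {y\<in>V. g y = n}) = (\<Sum>U\<in>R. card {y\<in>xi U. g y = n})"
    using sum.reindex_bij_betw[OF bij, of "\<lambda>V. card {y\<in>V. g y = n}"] by simp
  also have "\<dots> = (\<Sum>U\<in>R. card {x\<in>U. f x = n})"
  proof (rule sum.cong[OF refl])
    fix U assume U: "U \<in> R"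
    have V: "xi U \<in> R'" using bij_betw_apply[OF bij U] .
    obtain x0 where x0: "x0 \<in> U" using ne U by blast
    obtain y0 where y0: "y0 \<in> xi U" using ne' V by blast
    have fx: "\<forall>x\<in>U. f x = g y0" using compat U y0 by simp
    have g1: "\<forall>y\<in>xi U. f x0 = g y" using compat U x0 by simp
    have gy: "\<forall>y\<in>xi U. g y = g y0"
    proof
      fix y assume "y \<in> xi U"
      hence "f x0 = g y" using g1 by blast
      moreover have "f x0 = g y0" using g1 y0 by blast
      ultimately show "g y = g y0" by simp
    qed
    show "card {y\<in>xi U. g y = n} = card {x\<in>U. f x = n}"
    proof (cases "g y0 = n")
      case True
      hence "{y\<in>xi U. g y = n} = xi U" "{x\<in>U. f x = n} = U" using fx gy by auto
      thus ?thesis using cR cR' U V by simp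
    next
      case False
      hence "{y\<in>xi U. g y = n} = {}" "{x\<in>U. f x = n} = {}" using fx gy by auto
      thus ?thesis by (simp only: card.empty)
    qed
  qed
  finally show ?thesis using c1 c2 by simp
qed



locale iso2 = A: sb P C + B: sb Q D for P C :: "'a monoid" and Q D :: "'b monoid" +
  fixes xi :: "'a set \<Rightarrow> 'b set" and delta :: "'a \<Rightarrow> 'b"
  assumes qi: "quot_iso P C Q D xi"
    and dl: "delta \<in> iso (P\<lparr>carrier := derived P C\<rparr>) (Q\<lparr>carrier := derived Q D\<rparr>)"
    and cp: "\<forall>a\<in>carrier P. \<forall>b\<in>carrier P. \<forall>a1\<in>carrier Q. \<forall>b1\<in>carrier Q.
           xi (r_coset P (Ann P C) a) = r_coset Q (Ann Q D) a1 \<longrightarrow>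
           xi (r_coset P (Ann P C) b) = r_coset Q (Ann Q D) b1 \<longrightarrow>
           delta (acomm P a b) = acomm Q a1 b1 \<and>
           delta (bstar P C a b) = bstar Q D a1 b1"
begin

abbreviation "H \<equiv> Ann P C"
abbreviation "H' \<equiv> Ann Q D"

lemma xi_bij: "bij_betw xi (RCOSETS P H) (RCOSETS Q H')"
  using qi unfolding quot_iso_def by blast

lemma xi_P: "U \<in> RCOSETS P H \<Longrightarrow> V \<in> RCOSETS P H \<Longrightarrow> xi (set_mult P U V) = set_mult Q (xi U) (xi V)"
  using qi unfolding quot_iso_def by blast
lemma xi_C: "U \<in> RCOSETS P H \<Longrightarrow> V \<in> RCOSETS P H \<Longrightarrow> xi (set_mult C U V) = set_mult D (xi U) (xi V)"
  using qi unfolding quot_iso_def by blast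

lemma cosP: "a \<in> carrier P \<Longrightarrow> r_coset P H a \<in> RCOSETS P H"
  unfolding RCOSETS_def by blast

lemma rep2: "a \<in> carrier P \<Longrightarrow> \<exists>a1\<in>carrier Q. xi (r_coset P H a) = r_coset Q H' a1"
proof -
  assume a: "a \<in> carrier P"
  have "xi (r_coset P H a) \<in> RCOSETS Q H'" using bij_betw_apply[OF xi_bij cosP[OF a]] .
  thus ?thesis unfolding RCOSETS_def by blast
qed

lemma rep1: "a1 \<in> carrier Q \<Longrightarrow> \<exists>a\<in>carrier P. xi (r_coset P H a) = r_coset Q H' a1"
proof -
  assume a1: "a1 \<in> carrier Q"
  have "r_coset Q H' a1 \<in> RCOSETS Q H'" unfolding RCOSETS_def using a1 by blast
  hence "r_coset Q H' a1 \<in> xi ` RCOSETS P H" using xi_bij unfolding bij_betw_def by blast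
  then obtain U where U: "U \<in> RCOSETS P H" "xi U = r_coset Q H' a1" by blast
  then obtain a where "a \<in> carrier P" "U = r_coset P H a" unfolding RCOSETS_def by blast
  thus ?thesis using U by blast
qed

lemma dcar: "bij_betw delta (derived P C) (derived Q D)"
  using dl unfolding iso_def by simp

lemma dmult: "u \<in> derived P C \<Longrightarrow> v \<in> derived P C \<Longrightarrow> delta (u \<otimes>\<^bsub>P\<^esub> v) = delta u \<otimes>\<^bsub>Q\<^esub> delta v"
proof -
  assume u: "u \<in> derived P C" and v: "v \<in> derived P C"
  have "delta \<in> hom (P\<lparr>carrier := derived P C\<rparr>) (Q\<lparr>carrier := derived Q D\<rparr>)" using dl unfolding iso_def by simp
  from hom_mult[OF this, of u v] show ?thesis using u v by simp
qed

lemma der_bstar: "a \<in> carrier P \<Longrightarrow> b \<in> carrier P \<Longrightarrow> bstar P C a b \<in> derived P C"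
  unfolding derived_def by (rule generate.incl) blast
lemma der_acomm: "a \<in> carrier P \<Longrightarrow> b \<in> carrier P \<Longrightarrow> acomm P a b \<in> derived P C"
  unfolding derived_def by (rule generate.incl) blast
lemma der_mult: "u \<in> derived P C \<Longrightarrow> v \<in> derived P C \<Longrightarrow> u \<otimes>\<^bsub>P\<^esub> v \<in> derived P C"
  unfolding derived_def by (rule generate.eng)

lemma K:
  assumes b: "b \<in> carrier P" and x: "x \<in> carrier P" and b1: "b1 \<in> carrier Q" and x1: "x1 \<in> carrier Q"
    and hb: "xi (r_coset P H b) = r_coset Q H' b1" and hx: "xi (r_coset P H x) = r_coset Q H' x1"
  shows "xi (r_coset P H (lam P C b x)) = r_coset Q H' (lam Q D b1 x1)"
proof -
  have bC: "b \<in> carrier C" and xC: "x \<in> carrier C" using b x A.car by auto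
  have b1C: "b1 \<in> carrier D" and x1C: "x1 \<in> carrier D" using b1 x1 B.car by auto
  have l: "lam P C b x \<in> carrier P" using A.lam_closed b x .
  have s1: "set_mult C (r_coset P H b) (r_coset P H x) = r_coset P H (b \<otimes>\<^bsub>C\<^esub> x)"
    using normal.rcos_sum[OF A.Ann_normC bC xC] A.coset_eq b x A.Cm by simp
  have s1': "set_mult D (r_coset Q H' b1) (r_coset Q H' x1) = r_coset Q H' (b1 \<otimes>\<^bsub>D\<^esub> x1)"
    using normal.rcos_sum[OF B.Ann_normC b1C x1C] B.coset_eq b1 x1 B.Cm by simp
  have e1: "xi (r_coset P H (b \<otimes>\<^bsub>C\<^esub> x)) = r_coset Q H' (b1 \<otimes>\<^bsub>D\<^esub> x1)"
    using xi_C[OF cosP[OF b] cosP[OF x]] s1 s1' hb hx by simp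
  obtain w1 where w1: "w1 \<in> carrier Q" "xi (r_coset P H (lam P C b x)) = r_coset Q H' w1"
    using rep2[OF l] by blast
  have s2: "set_mult P (r_coset P H b) (r_coset P H (lam P C b x)) = r_coset P H (b \<otimes>\<^bsub>C\<^esub> x)"
    using normal.rcos_sum[OF A.Ann_normP b l] A.mult_lam[OF b x] by simp
  have e2: "xi (r_coset P H (b \<otimes>\<^bsub>C\<^esub> x)) = r_coset Q H' (b1 \<otimes>\<^bsub>Q\<^esub> w1)"
    using xi_P[OF cosP[OF b] cosP[OF l]] s2 hb w1 normal.rcos_sum[OF B.Ann_normP b1 w1(1)] by simp
  have l1: "lam Q D b1 x1 \<in> carrier Q" using B.lam_closed b1 x1 .
  have e3: "r_coset Q H' (b1 \<otimes>\<^bsub>Q\<^esub> w1) = r_coset Q H' (b1 \<otimes>\<^bsub>Q\<^esub> lam Q D b1 x1)"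
    using e1 e2 B.mult_lam[OF b1 x1] by simp
  have c: "\<And>w. w \<in> carrier Q \<Longrightarrow> r_coset Q H' w = set_mult Q (r_coset Q H' (inv\<^bsub>Q\<^esub> b1)) (r_coset Q H' (b1 \<otimes>\<^bsub>Q\<^esub> w))"
  proof -
    fix w assume w: "w \<in> carrier Q"
    have "set_mult Q (r_coset Q H' (inv\<^bsub>Q\<^esub> b1)) (r_coset Q H' (b1 \<otimes>\<^bsub>Q\<^esub> w)) = r_coset Q H' (inv\<^bsub>Q\<^esub> b1 \<otimes>\<^bsub>Q\<^esub> (b1 \<otimes>\<^bsub>Q\<^esub> w))"
      using normal.rcos_sum[OF B.Ann_normP, of "inv\<^bsub>Q\<^esub> b1" "b1 \<otimes>\<^bsub>Q\<^esub> w"] b1 w by simp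
    also have "inv\<^bsub>Q\<^esub> b1 \<otimes>\<^bsub>Q\<^esub> (b1 \<otimes>\<^bsub>Q\<^esub> w) = w" using b1 w by (simp add: B.P.m_assoc[symmetric])
    finally show "r_coset Q H' w = set_mult Q (r_coset Q H' (inv\<^bsub>Q\<^esub> b1)) (r_coset Q H' (b1 \<otimes>\<^bsub>Q\<^esub> w))" by simp
  qed
  have "r_coset Q H' w1 = r_coset Q H' (lam Q D b1 x1)" using c[OF w1(1)] c[OF l1] e3 by simp
  thus ?thesis using w1 by simp
qed

lemma rmultP_card: "S \<subseteq> carrier P \<Longrightarrow> x \<in> carrier P \<Longrightarrow> card ((\<lambda>u. u \<otimes>\<^bsub>P\<^esub> x) ` S) = card S"
proof (rule card_image, rule inj_onI)
  fix u v assume S: "S \<subseteq> carrier P" and x: "x \<in> carrier P" and u: "u \<in> S" and v: "v \<in> S"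
     and e: "u \<otimes>\<^bsub>P\<^esub> x = v \<otimes>\<^bsub>P\<^esub> x"
  have uc: "u \<in> carrier P" and vc: "v \<in> carrier P" using S u v by auto
  have "u \<otimes>\<^bsub>P\<^esub> x \<otimes>\<^bsub>P\<^esub> inv\<^bsub>P\<^esub> x = v \<otimes>\<^bsub>P\<^esub> x \<otimes>\<^bsub>P\<^esub> inv\<^bsub>P\<^esub> x" using e by simp
  thus "u = v" using uc vc x by (simp add: A.P.m_assoc)
qed
lemma rmultQ_card: "S \<subseteq> carrier Q \<Longrightarrow> x \<in> carrier Q \<Longrightarrow> card ((\<lambda>u. u \<otimes>\<^bsub>Q\<^esub> x) ` S) = card S"
proof (rule card_image, rule inj_onI)
  fix u v assume S: "S \<subseteq> carrier Q" and x: "x \<in> carrier Q" and u: "u \<in> S" and v: "v \<in> S"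
     and e: "u \<otimes>\<^bsub>Q\<^esub> x = v \<otimes>\<^bsub>Q\<^esub> x"
  have uc: "u \<in> carrier Q" and vc: "v \<in> carrier Q" using S u v by auto
  have "u \<otimes>\<^bsub>Q\<^esub> x \<otimes>\<^bsub>Q\<^esub> inv\<^bsub>Q\<^esub> x = v \<otimes>\<^bsub>Q\<^esub> x \<otimes>\<^bsub>Q\<^esub> inv\<^bsub>Q\<^esub> x" using e by simp
  thus "u = v" using uc vc x by (simp add: B.P.m_assoc)
qed

lemma delta_card: "S \<subseteq> derived P C \<Longrightarrow> card (delta ` S) = card S"
  by (rule card_image) (use dcar inj_on_subset in \<open>auto simp: bij_betw_def\<close>)

lemma lamO_imgA: "x \<in> carrier P \<Longrightarrow> A.lamO x = (\<lambda>u. u \<otimes>\<^bsub>P\<^esub> x) ` ((\<lambda>a. bstar P C a x) ` carrier P)"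
proof -
  assume x: "x \<in> carrier P"
  have "A.lamO x = (\<lambda>a. lam P C a x) ` carrier P" unfolding A.lamO_def by blast
  also have "\<dots> = (\<lambda>a. bstar P C a x \<otimes>\<^bsub>P\<^esub> x) ` carrier P"
    by (rule image_cong[OF refl]) (use A.lam_bstar x in simp)
  finally show ?thesis by (simp add: image_image)
qed
lemma lamO_imgB: "x \<in> carrier Q \<Longrightarrow> B.lamO x = (\<lambda>u. u \<otimes>\<^bsub>Q\<^esub> x) ` ((\<lambda>a. bstar Q D a x) ` carrier Q)"
proof -
  assume x: "x \<in> carrier Q"
  have "B.lamO x = (\<lambda>a. lam Q D a x) ` carrier Q" unfolding B.lamO_def by blast
  also have "\<dots> = (\<lambda>a. bstar Q D a x \<otimes>\<^bsub>Q\<^esub> x) ` carrier Q"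
    by (rule image_cong[OF refl]) (use B.lam_bstar x in simp)
  finally show ?thesis by (simp add: image_image)
qed

lemma card_lam:
  assumes x: "x \<in> carrier P" and x1: "x1 \<in> carrier Q" and hx: "xi (r_coset P H x) = r_coset Q H' x1"
  shows "card (A.lamO x) = card (B.lamO x1)"
proof -
  let ?S = "(\<lambda>a. bstar P C a x) ` carrier P"
  let ?S1 = "(\<lambda>a. bstar Q D a x1) ` carrier Q"
  have sub: "?S \<subseteq> carrier P" using A.bstar_closed x by blast
  have sub1: "?S1 \<subseteq> carrier Q" using B.bstar_closed x1 by blast
  have subd: "?S \<subseteq> derived P C" using der_bstar x by blast
  have img: "delta ` ?S = ?S1"
  proof
    show "delta ` ?S \<subseteq> ?S1"
    proof
      fix t assume "t \<in> delta ` ?S"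
      then obtain a where a: "a \<in> carrier P" and t: "t = delta (bstar P C a x)" by blast
      obtain a1 where a1: "a1 \<in> carrier Q" "xi (r_coset P H a) = r_coset Q H' a1" using rep2[OF a] by blast
      have "t = bstar Q D a1 x1" using cp a x a1 x1 hx t by blast
      thus "t \<in> ?S1" using a1 by blast
    qed
    show "?S1 \<subseteq> delta ` ?S"
    proof
      fix t assume "t \<in> ?S1"
      then obtain a1 where a1: "a1 \<in> carrier Q" and t: "t = bstar Q D a1 x1" by blast
      obtain a where a: "a \<in> carrier P" "xi (r_coset P H a) = r_coset Q H' a1" using rep1[OF a1] by blast
      have "t = delta (bstar P C a x)" using cp a x a1 x1 hx t by metis
      thus "t \<in> delta ` ?S" using a by blast
    qed
  qed
  have "card (A.lamO x) = card ?S" using lamO_imgA[OF x] rmultP_card[OF sub x] by simp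
  also have "\<dots> = card (delta ` ?S)" using delta_card[OF subd] by simp
  also have "\<dots> = card ?S1" using img by simp
  also have "\<dots> = card (B.lamO x1)" using lamO_imgB[OF x1] rmultQ_card[OF sub1 x1] by simp
  finally show ?thesis .
qed

lemma thO_imgA: "x \<in> carrier P \<Longrightarrow> A.thO x = (\<lambda>u. u \<otimes>\<^bsub>P\<^esub> x) ` ((\<lambda>(a,b). acomm P a (lam P C b x) \<otimes>\<^bsub>P\<^esub> bstar P C b x) ` (carrier P \<times> carrier P))"
proof -
  assume x: "x \<in> carrier P"
  have e: "\<And>a b. a \<in> carrier P \<Longrightarrow> b \<in> carrier P \<Longrightarrow> theta P C a b x = (acomm P a (lam P C b x) \<otimes>\<^bsub>P\<^esub> bstar P C b x) \<otimes>\<^bsub>P\<^esub> x"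
  proof -
    fix a b assume a: "a \<in> carrier P" and b: "b \<in> carrier P"
    have "theta P C a b x = (theta P C a b x \<otimes>\<^bsub>P\<^esub> inv\<^bsub>P\<^esub> x) \<otimes>\<^bsub>P\<^esub> x"
      using A.theta_closed[OF a b x] x by (simp add: A.P.m_assoc)
    thus "theta P C a b x = (acomm P a (lam P C b x) \<otimes>\<^bsub>P\<^esub> bstar P C b x) \<otimes>\<^bsub>P\<^esub> x"
      using A.theta_decomp[OF a b x] by simp
  qed
  have "A.thO x = (\<lambda>(a,b). theta P C a b x) ` (carrier P \<times> carrier P)" unfolding A.thO_def by auto
  also have "\<dots> = (\<lambda>(a,b). (acomm P a (lam P C b x) \<otimes>\<^bsub>P\<^esub> bstar P C b x) \<otimes>\<^bsub>P\<^esub> x) ` (carrier P \<times> carrier P)"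
    by (rule image_cong[OF refl]) (use e in auto)
  finally show ?thesis by (simp add: image_image case_prod_beta)
qed
lemma thO_imgB: "x \<in> carrier Q \<Longrightarrow> B.thO x = (\<lambda>u. u \<otimes>\<^bsub>Q\<^esub> x) ` ((\<lambda>(a,b). acomm Q a (lam Q D b x) \<otimes>\<^bsub>Q\<^esub> bstar Q D b x) ` (carrier Q \<times> carrier Q))"
proof -
  assume x: "x \<in> carrier Q"
  have e: "\<And>a b. a \<in> carrier Q \<Longrightarrow> b \<in> carrier Q \<Longrightarrow> theta Q D a b x = (acomm Q a (lam Q D b x) \<otimes>\<^bsub>Q\<^esub> bstar Q D b x) \<otimes>\<^bsub>Q\<^esub> x"
  proof -
    fix a b assume a: "a \<in> carrier Q" and b: "b \<in> carrier Q"
    have "theta Q D a b x = (theta Q D a b x \<otimes>\<^bsub>Q\<^esub> inv\<^bsub>Q\<^esub> x) \<otimes>\<^bsub>Q\<^esub> x"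
      using B.theta_closed[OF a b x] x by (simp add: B.P.m_assoc)
    thus "theta Q D a b x = (acomm Q a (lam Q D b x) \<otimes>\<^bsub>Q\<^esub> bstar Q D b x) \<otimes>\<^bsub>Q\<^esub> x"
      using B.theta_decomp[OF a b x] by simp
  qed
  have "B.thO x = (\<lambda>(a,b). theta Q D a b x) ` (carrier Q \<times> carrier Q)" unfolding B.thO_def by auto
  also have "\<dots> = (\<lambda>(a,b). (acomm Q a (lam Q D b x) \<otimes>\<^bsub>Q\<^esub> bstar Q D b x) \<otimes>\<^bsub>Q\<^esub> x) ` (carrier Q \<times> carrier Q)"
    by (rule image_cong[OF refl]) (use e in auto)
  finally show ?thesis by (simp add: image_image case_prod_beta)
qed

lemma card_th:
  assumes x: "x \<in> carrier P" and x1: "x1 \<in> carrier Q" and hx: "xi (r_coset P H x) = r_coset Q H' x1"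
  shows "card (A.thO x) = card (B.thO x1)"
proof -
  let ?S = "(\<lambda>(a,b). acomm P a (lam P C b x) \<otimes>\<^bsub>P\<^esub> bstar P C b x) ` (carrier P \<times> carrier P)"
  let ?S1 = "(\<lambda>(a,b). acomm Q a (lam Q D b x1) \<otimes>\<^bsub>Q\<^esub> bstar Q D b x1) ` (carrier Q \<times> carrier Q)"
  have sub: "?S \<subseteq> carrier P" using A.bstar_closed A.acomm_closed A.lam_closed x by auto
  have sub1: "?S1 \<subseteq> carrier Q" using B.bstar_closed B.acomm_closed B.lam_closed x1 by auto
  have subd: "?S \<subseteq> derived P C" using der_bstar der_acomm der_mult A.lam_closed x by auto
  have key: "\<And>a b a1 b1. a \<in> carrier P \<Longrightarrow> b \<in> carrier P \<Longrightarrow> a1 \<in> carrier Q \<Longrightarrow> b1 \<in> carrier Q \<Longrightarrow>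
     xi (r_coset P H a) = r_coset Q H' a1 \<Longrightarrow> xi (r_coset P H b) = r_coset Q H' b1 \<Longrightarrow>
     delta (acomm P a (lam P C b x) \<otimes>\<^bsub>P\<^esub> bstar P C b x) = acomm Q a1 (lam Q D b1 x1) \<otimes>\<^bsub>Q\<^esub> bstar Q D b1 x1"
  proof -
    fix a b a1 b1 assume a: "a \<in> carrier P" and b: "b \<in> carrier P" and a1: "a1 \<in> carrier Q" and b1: "b1 \<in> carrier Q"
      and ha: "xi (r_coset P H a) = r_coset Q H' a1" and hb: "xi (r_coset P H b) = r_coset Q H' b1"
    have w: "lam P C b x \<in> carrier P" using A.lam_closed b x .
    have w1: "lam Q D b1 x1 \<in> carrier Q" using B.lam_closed b1 x1 .
    have hw: "xi (r_coset P H (lam P C b x)) = r_coset Q H' (lam Q D b1 x1)" using K[OF b x b1 x1 hb hx] .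
    have d1: "delta (acomm P a (lam P C b x)) = acomm Q a1 (lam Q D b1 x1)"
      using cp a w a1 w1 ha hw by blast
    have d2: "delta (bstar P C b x) = bstar Q D b1 x1"
      using cp b x b1 x1 hb hx by blast
    show "delta (acomm P a (lam P C b x) \<otimes>\<^bsub>P\<^esub> bstar P C b x) = acomm Q a1 (lam Q D b1 x1) \<otimes>\<^bsub>Q\<^esub> bstar Q D b1 x1"
      using dmult[OF der_acomm[OF a w] der_bstar[OF b x]] d1 d2 by simp
  qed
  have img: "delta ` ?S = ?S1"
  proof
    show "delta ` ?S \<subseteq> ?S1"
    proof
      fix t assume "t \<in> delta ` ?S"
      then obtain a b where a: "a \<in> carrier P" and b: "b \<in> carrier P" and t: "t = delta (acomm P a (lam P C b x) \<otimes>\<^bsub>P\<^esub> bstar P C b x)" by auto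
      obtain a1 where a1: "a1 \<in> carrier Q" "xi (r_coset P H a) = r_coset Q H' a1" using rep2[OF a] by blast
      obtain b1 where b1: "b1 \<in> carrier Q" "xi (r_coset P H b) = r_coset Q H' b1" using rep2[OF b] by blast
      have "t = acomm Q a1 (lam Q D b1 x1) \<otimes>\<^bsub>Q\<^esub> bstar Q D b1 x1" using key[OF a b a1(1) b1(1) a1(2) b1(2)] t by simp
      thus "t \<in> ?S1" using a1 b1 by (intro image_eqI[of _ _ "(a1,b1)"]) auto
    qed
    show "?S1 \<subseteq> delta ` ?S"
    proof
      fix t assume "t \<in> ?S1"
      then obtain a1 b1 where a1: "a1 \<in> carrier Q" and b1: "b1 \<in> carrier Q" and t: "t = acomm Q a1 (lam Q D b1 x1) \<otimes>\<^bsub>Q\<^esub> bstar Q D b1 x1" by auto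
      obtain a where a: "a \<in> carrier P" "xi (r_coset P H a) = r_coset Q H' a1" using rep1[OF a1] by blast
      obtain b where b: "b \<in> carrier P" "xi (r_coset P H b) = r_coset Q H' b1" using rep1[OF b1] by blast
      have "t = delta (acomm P a (lam P C b x) \<otimes>\<^bsub>P\<^esub> bstar P C b x)" using key[OF a(1) b(1) a1 b1 a(2) b(2)] t by simp
      thus "t \<in> delta ` ?S" using a b by (intro image_eqI[of _ _ "acomm P a (lam P C b x) \<otimes>\<^bsub>P\<^esub> bstar P C b x"] image_eqI[of _ _ "(a,b)"]) auto
    qed
  qed
  have "card (A.thO x) = card ?S" using thO_imgA[OF x] rmultP_card[OF sub x] by simp
  also have "\<dots> = card (delta ` ?S)" using delta_card[OF subd] by simp
  also have "\<dots> = card ?S1" using img by simp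
  also have "\<dots> = card (B.thO x1)" using thO_imgB[OF x1] rmultQ_card[OF sub1 x1] by simp
  finally show ?thesis .
qed

lemma cosU: "U \<in> RCOSETS P H \<Longrightarrow> x \<in> U \<Longrightarrow> x \<in> carrier P \<and> U = r_coset P H x"
proof -
  assume U: "U \<in> RCOSETS P H" and x: "x \<in> U"
  then obtain a where a: "a \<in> carrier P" "U = r_coset P H a" unfolding RCOSETS_def by blast
  have "U \<subseteq> carrier P" using a A.P.r_coset_subset_G A.Ann_sub by blast
  hence "x \<in> carrier P" using x by blast
  moreover have "r_coset P H a = r_coset P H x" using A.P.repr_independence[OF _ a(1) A.Ann_subP] x a(2) by blast
  ultimately show ?thesis using a by simp
qed

lemma cosU': "V \<in> RCOSETS Q H' \<Longrightarrow> x \<in> V \<Longrightarrow> x \<in> carrier Q \<and> V = r_coset Q H' x"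
proof -
  assume U: "V \<in> RCOSETS Q H'" and x: "x \<in> V"
  then obtain a where a: "a \<in> carrier Q" "V = r_coset Q H' a" unfolding RCOSETS_def by blast
  have "V \<subseteq> carrier Q" using a B.P.r_coset_subset_G B.Ann_sub by blast
  hence "x \<in> carrier Q" using x by blast
  moreover have "r_coset Q H' a = r_coset Q H' x" using B.P.repr_independence[OF _ a(1) B.Ann_subP] x a(2) by blast
  ultimately show ?thesis using a by simp
qed

lemma ne_cos: "U \<in> RCOSETS P H \<Longrightarrow> U \<noteq> {}"
  unfolding RCOSETS_def using A.P.rcos_self[OF _ A.Ann_subP] by blast
lemma ne_cos': "V \<in> RCOSETS Q H' \<Longrightarrow> V \<noteq> {}"
  unfolding RCOSETS_def using B.P.rcos_self[OF _ B.Ann_subP] by blast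

context
  assumes fP: "finite (carrier P)" and fQ: "finite (carrier Q)" and cPQ: "card (carrier P) = card (carrier Q)"
begin

lemma cardH: "card H = card H'"
proof -
  have l1: "card (RCOSETS P H) * card H = card (carrier P)"
    using A.P.lagrange[OF A.Ann_subP] unfolding order_def .
  have l2: "card (RCOSETS Q H') * card H' = card (carrier Q)"
    using B.P.lagrange[OF B.Ann_subP] unfolding order_def .
  have m: "card (RCOSETS P H) = card (RCOSETS Q H')" using bij_betw_same_card[OF xi_bij] .
  have "card (carrier P) \<noteq> 0" using fP A.P.one_closed by (metis card_0_eq empty_iff)
  hence "card (RCOSETS P H) \<noteq> 0" using l1 by (metis mult_zero_left)
  moreover have "card (RCOSETS P H) * card H = card (RCOSETS P H) * card H'" using l1 l2 m cPQ by simp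
  ultimately show ?thesis by simp
qed

lemma gen:
  fixes O1 :: "'a \<Rightarrow> 'a set" and O2 :: "'b \<Rightarrow> 'b set"
  assumes r1: "\<forall>x\<in>carrier P. x \<in> O1 x \<and> O1 x \<subseteq> carrier P" and t1: "\<forall>x\<in>carrier P. \<forall>y\<in>O1 x. O1 y = O1 x"
    and r2: "\<forall>x\<in>carrier Q. x \<in> O2 x \<and> O2 x \<subseteq> carrier Q" and t2: "\<forall>x\<in>carrier Q. \<forall>y\<in>O2 x. O2 y = O2 x"
    and cc: "\<And>x x1. x \<in> carrier P \<Longrightarrow> x1 \<in> carrier Q \<Longrightarrow> xi (r_coset P H x) = r_coset Q H' x1 \<Longrightarrow> card (O1 x) = card (O2 x1)"
  shows "graph_iso (big_orbits {O1 x | x. x \<in> carrier P}) orbit_adj (big_orbits {O2 x | x. x \<in> carrier Q}) orbit_adj"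
proof -
  let ?V = "big_orbits {O1 x | x. x \<in> carrier P}"
  let ?W = "big_orbits {O2 x | x. x \<in> carrier Q}"
  have fV: "finite ?V"
  proof (rule finite_subset[of _ "Pow (carrier P)"])
    show "?V \<subseteq> Pow (carrier P)" unfolding big_orbits_def using r1 by blast
  qed (use fP in simp)
  have fW: "finite ?W"
  proof (rule finite_subset[of _ "Pow (carrier Q)"])
    show "?W \<subseteq> Pow (carrier Q)" unfolding big_orbits_def using r2 by blast
  qed (use fQ in simp)
  have bc: "card {x\<in>carrier P. card (O1 x) = n} = card {y\<in>carrier Q. card (O2 y) = n}" for n
  proof (rule block_count[where R = "RCOSETS P H" and R' = "RCOSETS Q H'" and k = "card H" and xi = xi])
    show "finite (carrier P)" by (rule fP)
    show "finite (carrier Q)" by (rule fQ)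
    show "\<Union>(RCOSETS P H) = carrier P" by (rule A.P.rcosets_part_G[OF A.Ann_subP])
    show "\<Union>(RCOSETS Q H') = carrier Q" by (rule B.P.rcosets_part_G[OF B.Ann_subP])
    show "pairwise disjnt (RCOSETS P H)" by (rule A.P.rcos_disjoint[OF A.Ann_subP])
    show "pairwise disjnt (RCOSETS Q H')" by (rule B.P.rcos_disjoint[OF B.Ann_subP])
    show "\<forall>U\<in>RCOSETS P H. card U = card H" using A.P.card_rcosets_equal[OF _ A.Ann_sub] by simp
    show "\<forall>U\<in>RCOSETS Q H'. card U = card H" using B.P.card_rcosets_equal[OF _ B.Ann_sub] cardH by simp
    show "bij_betw xi (RCOSETS P H) (RCOSETS Q H')" by (rule xi_bij)
    show "\<forall>U\<in>RCOSETS P H. U \<noteq> {}" using ne_cos by blast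
    show "\<forall>U\<in>RCOSETS Q H'. U \<noteq> {}" using ne_cos' by blast
    show "\<forall>U\<in>RCOSETS P H. \<forall>x\<in>U. \<forall>y\<in>xi U. card (O1 x) = card (O2 y)"
    proof (intro ballI)
      fix U x y assume U: "U \<in> RCOSETS P H" and x: "x \<in> U" and y: "y \<in> xi U"
      have V: "xi U \<in> RCOSETS Q H'" using bij_betw_apply[OF xi_bij U] .
      note cx = cosU[OF U x] and cy = cosU'[OF V y]
      show "card (O1 x) = card (O2 y)" using cc[of x y] cx cy by simp
    qed
  qed
  have cnt: "card {L\<in>?V. card L = n} = card {L\<in>?W. card L = n}" for n
  proof (cases "1 < n")
    case True
    have e1: "n * card {L \<in> {O1 x | x. x \<in> carrier P}. card L = n} = card {x\<in>carrier P. card (O1 x) = n}"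
      by (rule orbit_count[OF fP r1 t1])
    have e2: "n * card {L \<in> {O2 x | x. x \<in> carrier Q}. card L = n} = card {x\<in>carrier Q. card (O2 x) = n}"
      by (rule orbit_count[OF fQ r2 t2])
    have "n * card {L \<in> {O1 x | x. x \<in> carrier P}. card L = n} = n * card {L \<in> {O2 x | x. x \<in> carrier Q}. card L = n}"
      unfolding e1 e2 by (rule bc)
    hence "card {L \<in> {O1 x | x. x \<in> carrier P}. card L = n} = card {L \<in> {O2 x | x. x \<in> carrier Q}. card L = n}"
      using True by simp
    thus ?thesis unfolding big_count using True by simp
  next
    case False
    thus ?thesis unfolding big_count by simp
  qed
  obtain f where "bij_betw f ?V ?W" "\<forall>L\<in>?V. card (f L) = card L"
    using equal_counts_bij[OF fV fW] cnt by blast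
  thus ?thesis by (rule graph_from_bij)
qed

lemma lam_iso: "Lambda_graph_iso P C Q D"
  unfolding Lambda_graph_iso_def A.lambda_orbits_eq B.lambda_orbits_eq
  by (rule gen[OF _ _ _ _ card_lam]) (use A.lamO_refl A.lamO_trans B.lamO_refl B.lamO_trans in blast)+

lemma th_iso: "Theta_graph_iso P C Q D"
  unfolding Theta_graph_iso_def A.theta_orbits_eq B.theta_orbits_eq
  by (rule gen[OF _ _ _ _ card_th]) (use A.thO_refl A.thO_trans B.thO_refl B.thO_trans in blast)+

end
end

theorem mainTheorem8:
  fixes P C :: "'a monoid" and Q D :: "'b monoid"
  assumes "skew_brace P C" and "skew_brace Q D"
    and "finite (carrier P)" and "finite (carrier Q)"
    and "card (carrier P) = card (carrier Q)"
    and "isoclinic P C Q D"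
  shows "Lambda_graph_iso P C Q D \<and> Theta_graph_iso P C Q D"
proof -
  obtain xi delta where qi: "quot_iso P C Q D xi"
    and dl: "delta \<in> iso (P\<lparr>carrier := derived P C\<rparr>) (Q\<lparr>carrier := derived Q D\<rparr>)"
    and cp: "\<forall>a\<in>carrier P. \<forall>b\<in>carrier P. \<forall>a1\<in>carrier Q. \<forall>b1\<in>carrier Q.
           xi (r_coset P (Ann P C) a) = r_coset Q (Ann Q D) a1 \<longrightarrow>
           xi (r_coset P (Ann P C) b) = r_coset Q (Ann Q D) b1 \<longrightarrow>
           delta (acomm P a b) = acomm Q a1 b1 \<and>
           delta (bstar P C a b) = bstar Q D a1 b1"
    using assms(6) unfolding isoclinic_def by blast
  interpret I: iso2 P C Q D xi delta
    using assms(1,2) qi dl cp by (simp add: iso2_def iso2_axioms_def sb_def)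
  show ?thesis using I.lam_iso[OF assms(3,4,5)] I.th_iso[OF assms(3,4,5)] by blast
qed

end
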